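(* Under the standing assumptions below, the limit pair $(\mu,f)$ satisfies $$\int_0^T\int_{\mathbb R^{2D}}\big(|v-\bar v|^2+\lambda|f(t,x,v)|^2\big)\,d\mu(t,x,v)\,dt\;\le\;\sqrt\lambda\int_{\mathbb R^{2D}}|v-\bar v|^2\,d\mu_0(x,v).$$
   Context: Fix integers $D\ge1$, a horizon $T>0$, a weight $\lambda>0$ and a target velocity $\bar v\in\mathbb R^D$. The interaction kernel $\Psi:\mathbb R^D\times\mathbb R^D\to\mathbb R$ is Lipschitz continuous, symmetric, nonnegative and bounded. The admissible control set $\mathcal F$ consists of Carathéodory functions $f:[0,T]\times\mathbb R^{2D}\to\mathbb R^D$ with $f(t,\cdot)\in W^{1,\infty}_{loc}(\mathbb R^{2D})$ and $|f(t,0)|+\|f(t,\cdot)\|_{Lip}\le C_B$ for a.e. $t$, with $C_B\ge\lambda^{-1/2}(1+|\bar v|)$. For $N\ge1$, $f\in\mathcal F$ and initial data $(x_{i0},v_{i0})_{i=1}^N$, the $N$-particle state solves $\dot x_i=v_i$, $\dot v_i=\frac1N\sum_{j}\Psi(x_i,x_j)(v_j-v_i)+f(t,x_i,v_i)$, $(x_i,v_i)(0)=(x_{i0},v_{i0})$; the particle problem $\mathcal Q_N$ is to minimize $\frac1N\sum_{i=1}^N\int_0^T|v_i-\bar v|^2+\lambda|f(t,x_i,v_i)|^2dt$ over $f\in\mathcal F$, and a minimizer is an optimal control. Its empirical measure is $\mu_N(t)=\frac1N\sum_i\delta_{x_i(t)}\otimes\delta_{v_i(t)}$. $\mathcal W_1$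 denotes the 1-Wasserstein distance. Standing assumptions: $\mu_0$ is a Borel probability measure on $\mathbb R^{2D}$ with support in the ball $B(0,R)\subset\mathbb R^{2D}$. There is a sequence $N_k\to\infty$ and, for each $k$, initial data $(x_{i0},v_{i0})\in B(0,R)$, $i=1,\dots,N_k$, with $\mathcal W_1(\mu_{N_k}(0),\mu_0)\to0$, and an optimal control $f_{N_k}$ of $\mathcal Q_{N_k}$ with optimal trajectory and empirical measures $\mu_{N_k}(t)$. The pair $(\mu,f)$, $\mu\in C([0,T];P_1(\mathbb R^{2D}))$, $f\in\mathcal F$, is a weak solution (in the sense of distributions, tested against $C_0^\infty([0,T]\times\mathbb R^{2D})$ functions) of $\partial_t\mu+v\cdot\nabla_x\mu+\nabla_v\cdot(Q+f\mu)=0$, $\mu(0)=\mu_0$, where $Q(t,x,v)=\mu(t,x,v)\int\Psi(x,y)(v_*-v)\,d\mu(t,y,v_* )$, such that $\operatorname{supp}\mu(t)\subset B(0,R)$ for all $t$, $\mathcal W_1(\mu_{N_k}(t),\mu(t))\to0$ uniformly in $t\in[0,T]$, and the lower semicontinuity inequality $\int_0^T\int(|v-\bar v|^2+\lambda|f|^2)d\mu\,dt\le\liminf_k\int_0^T\int(|v-\bar v|^2+\lambda|f_{N_k}|^2)d\mu_{N_k}\,dt$ holds (this is the optimal pair of the mean-field problem given by the existence theory). *)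

theory Defs
  imports "HOL-Analysis.Analysis" "HOL-Probability.Probability"
begin

text \<open>Phase space R^{2D} is modelled as (real^'d) \<times> (real^'d); a point is (x, v).\<close>

type_synonym 'd phase = "(real^'d) \<times> (real^'d)"

primrec Ck :: "nat \<Rightarrow> ('a::real_normed_vector \<Rightarrow> real) \<Rightarrow> bool" where
  "Ck 0 g = continuous_on UNIV g"
| "Ck (Suc k) g = (\<exists>D. (\<forall>p. (g has_derivative D p) (at p)) \<and> (\<forall>h. Ck k (\<lambda>p. D p h)))"

definition smooth_fn :: "('a::real_normed_vector \<Rightarrow> real) \<Rightarrow> bool" where
  "smooth_fn g \<longleftrightarrow> (\<forall>k. Ck k g)"

text \<open>Test functions C_0^\<infinity>([0,T] \<times> R^{2D}): smooth, compactly supported in (-\<infinity>,T) \<times> R^{2D}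
  (so they vanish near t = T; the initial datum enters through the t = 0 term).\<close>
definition test_fn :: "real \<Rightarrow> (real \<times> ('d::finite) phase \<Rightarrow> real) \<Rightarrow> bool" where
  "test_fn T \<phi> \<longleftrightarrow> smooth_fn \<phi> \<and>
     (\<exists>K. compact K \<and> K \<subseteq> {p. fst p < T} \<and> (\<forall>p. p \<notin> K \<longrightarrow> \<phi> p = 0))"

text \<open>Admissible controls \<F>: Caratheodory (measurable in t for each state, Lipschitz hence
  continuous and W^{1,\<infinity>}_loc in the state for a.e. t) with |f(t,0)| + Lip(f(t,.)) \<le> C_B a.e.\<close>
definition admissible :: "real \<Rightarrow> real \<Rightarrow> (real \<Rightarrow> ('d::finite) phase \<Rightarrow> real^'d) \<Rightarrow> bool" where
  "admissible T CB f \<longleftrightarrow>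
     (\<forall>z. (\<lambda>t. f t z) \<in> borel_measurable (lebesgue_on {0..T})) \<and>
     (AE t in lebesgue_on {0..T}. \<exists>L. L-lipschitz_on UNIV (f t) \<and> norm (f t 0) + L \<le> CB)"

definition particle_traj ::
  "real \<Rightarrow> (real^('d::finite) \<Rightarrow> real^'d \<Rightarrow> real) \<Rightarrow> nat \<Rightarrow> (real \<Rightarrow> 'd phase \<Rightarrow> real^'d) \<Rightarrow>
   (nat \<Rightarrow> real^'d) \<Rightarrow> (nat \<Rightarrow> real^'d) \<Rightarrow> (nat \<Rightarrow> real \<Rightarrow> real^'d) \<Rightarrow> (nat \<Rightarrow> real \<Rightarrow> real^'d) \<Rightarrow> bool" where
  "particle_traj T \<Psi> N f x0 v0 x v \<longleftrightarrow>
     (\<forall>i<N. \<forall>t\<in>{0..T}.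
        (v i has_integral (x i t - x0 i)) {0..t} \<and>
        ((\<lambda>s. (1 / real N) *\<^sub>R (\<Sum>j<N. \<Psi> (x i s) (x j s) *\<^sub>R (v j s - v i s)) + f s (x i s, v i s))
            has_integral (v i t - v0 i)) {0..t})"

definition particle_cost ::
  "real \<Rightarrow> real \<Rightarrow> real^('d::finite) \<Rightarrow> nat \<Rightarrow> (real \<Rightarrow> 'd phase \<Rightarrow> real^'d) \<Rightarrow>
   (nat \<Rightarrow> real \<Rightarrow> real^'d) \<Rightarrow> (nat \<Rightarrow> real \<Rightarrow> real^'d) \<Rightarrow> ennreal" where
  "particle_cost T lam vbar N f x v =
     ennreal (1 / real N) * (\<Sum>i<N. \<integral>\<^sup>+ t\<in>{0..T}.
        ennreal ((norm (v i t - vbar))\<^sup>2 + lam * (norm (f t (x i t, v i t)))\<^sup>2) \<partial>lborel)"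

definition optimal_control ::
  "real \<Rightarrow> (real^('d::finite) \<Rightarrow> real^'d \<Rightarrow> real) \<Rightarrow> real \<Rightarrow> real^'d \<Rightarrow> real \<Rightarrow> nat \<Rightarrow>
   (nat \<Rightarrow> real^'d) \<Rightarrow> (nat \<Rightarrow> real^'d) \<Rightarrow> (real \<Rightarrow> 'd phase \<Rightarrow> real^'d) \<Rightarrow>
   (nat \<Rightarrow> real \<Rightarrow> real^'d) \<Rightarrow> (nat \<Rightarrow> real \<Rightarrow> real^'d) \<Rightarrow> bool" where
  "optimal_control T \<Psi> lam vbar CB N x0 v0 f x v \<longleftrightarrow>
     admissible T CB f \<and> particle_traj T \<Psi> N f x0 v0 x v \<and>
     (\<forall>g y w. admissible T CB g \<longrightarrow> particle_traj T \<Psi> N g x0 v0 y w \<longrightarrow>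
        particle_cost T lam vbar N f x v \<le> particle_cost T lam vbar N g y w)"

definition empirical :: "nat \<Rightarrow> (nat \<Rightarrow> 'a::topological_space) \<Rightarrow> 'a measure" where
  "empirical N z = distr (uniform_count_measure {..<N}) borel z"

definition W1 :: "'a::metric_space measure \<Rightarrow> 'a measure \<Rightarrow> ennreal" where
  "W1 \<mu> \<nu> = (INF \<pi> \<in> {\<pi> :: ('a \<times> 'a) measure. sets \<pi> = sets borel \<and>
        distr \<pi> borel fst = \<mu> \<and> distr \<pi> borel snd = \<nu>}.
      \<integral>\<^sup>+ p. ennreal (dist (fst p) (snd p)) \<partial>\<pi>)"

definition P1 :: "'a::real_normed_vector measure \<Rightarrow> bool" where
  "P1 \<mu> \<longleftrightarrow> prob_space \<mu> \<and> sets \<mu> = sets borel \<and> (\<integral>\<^sup>+ z. ennreal (norm z) \<partial>\<mu>) < \<infinity>"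

definition msupp :: "'a::metric_space measure \<Rightarrow> 'a set" where
  "msupp \<mu> = {z. \<forall>e>0. emeasure \<mu> (ball z e) > 0}"

text \<open>Weak (distributional) solution of
  \<partial>_t \<mu> + v\<cdot>\<nabla>_x \<mu> + \<nabla>_v\<cdot>(Q + f\<mu>) = 0, \<mu>(0) = \<mu>0, tested against test_fn.
  The integrand \<phi>'(t,x,v)(1,(v,w)) = \<partial>_t\<phi> + v\<cdot>\<nabla>_x\<phi> + w\<cdot>\<nabla>_v\<phi>, with
  w = \<integral>\<Psi>(x,y)(v_*-v) d\<mu>(t,y,v_*) + f(t,x,v).\<close>
definition weak_solution ::
  "real \<Rightarrow> (real^('d::finite) \<Rightarrow> real^'d \<Rightarrow> real) \<Rightarrow> 'd phase measure \<Rightarrow>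
   (real \<Rightarrow> 'd phase \<Rightarrow> real^'d) \<Rightarrow> (real \<Rightarrow> 'd phase measure) \<Rightarrow> bool" where
  "weak_solution T \<Psi> \<mu>0 f \<mu> \<longleftrightarrow>
     (\<forall>\<phi> \<phi>'. test_fn T \<phi> \<longrightarrow> (\<forall>p. (\<phi> has_derivative \<phi>' p) (at p)) \<longrightarrow>
        (\<integral>t. (\<integral>z. \<phi>' (t, z) (1, (snd z,
              (\<integral>w. \<Psi> (fst z) (fst w) *\<^sub>R (snd w - snd z) \<partial>(\<mu> t)) + f t z)) \<partial>(\<mu> t))
          \<partial>(lebesgue_on {0..T}))
        + (\<integral>z. \<phi> (0, z) \<partial>\<mu>0) = 0)"

end

theory Submission
  imports Defs
begin

lemma lip_cont:
  fixes F :: "(nat \<Rightarrow> 'a::real_normed_vector) \<Rightarrow> 'b::real_normed_vector"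
  assumes lip: "\<And>Y Z. norm (F Y - F Z) \<le> L * (\<Sum>j<N. norm (Y j - Z j))"
    and cont: "\<And>j. j < N \<Longrightarrow> continuous_on S (y j)"
  shows "continuous_on S (\<lambda>s. F (\<lambda>j. y j s))"
  unfolding continuous_on_def
proof (intro ballI)
  fix s0 assume s0: "s0 \<in> S"
  have "((\<lambda>s. L * (\<Sum>j<N. norm (y j s - y j s0))) \<longlongrightarrow> L * (\<Sum>j<N. norm (y j s0 - y j s0))) (at s0 within S)"
    apply (intro tendsto_intros)
    using cont s0 unfolding continuous_on_def by auto
  then have t: "((\<lambda>s. L * (\<Sum>j<N. norm (y j s - y j s0))) \<longlongrightarrow> 0) (at s0 within S)" by simp
  have "((\<lambda>s. F (\<lambda>j. y j s) - F (\<lambda>j. y j s0)) \<longlongrightarrow> 0) (at s0 within S)"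
    by (rule Lim_null_comparison[OF _ t]) (intro always_eventually allI lip)
  then show "((\<lambda>s. F (\<lambda>j. y j s)) \<longlongrightarrow> F (\<lambda>j. y j s0)) (at s0 within S)"
    using Lim_null by blast
qed

lemma int_pow: "0 \<le> t \<Longrightarrow> ((\<lambda>s::real. s^n) has_integral t^Suc n / real (Suc n)) {0..t}"
proof -
  assume t: "0 \<le> t"
  have "((\<lambda>s::real. s^n) has_integral (\<lambda>s. s^Suc n / real (Suc n)) t - (\<lambda>s. s^Suc n / real (Suc n)) 0) {0..t}"
    apply (rule fundamental_theorem_of_calculus[OF t])
    apply (subst has_real_derivative_iff_has_vector_derivative[symmetric])
    apply (auto intro!: derivative_eq_intros simp del: of_nat_Suc)
    apply (case_tac n)
    by (simp_all add: field_simps)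
  then show ?thesis by simp
qed

primrec picit :: "(nat \<Rightarrow> (nat \<Rightarrow> 'a) \<Rightarrow> 'a) \<Rightarrow> (nat \<Rightarrow> 'a) \<Rightarrow> nat \<Rightarrow> nat \<Rightarrow> real \<Rightarrow> 'a::euclidean_space" where
  "picit F Y0 0 = (\<lambda>i t. Y0 i)"
| "picit F Y0 (Suc n) = (\<lambda>i t. Y0 i + integral {0..t} (\<lambda>s. F i (\<lambda>j. picit F Y0 n j s)))"

lemma picard:
  fixes F :: "nat \<Rightarrow> (nat \<Rightarrow> 'a::euclidean_space) \<Rightarrow> 'a" and T L :: real
  assumes T: "0 \<le> T" and L: "0 \<le> L"
    and lip: "\<And>i Y Z. i < N \<Longrightarrow> norm (F i Y - F i Z) \<le> L * (\<Sum>j<N. norm (Y j - Z j))"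
  shows "\<exists>y. (\<forall>i<N. continuous_on {0..T} (y i)) \<and>
     (\<forall>i<N. \<forall>t\<in>{0..T}. ((\<lambda>s. F i (\<lambda>j. y j s)) has_integral (y i t - Y0 i)) {0..t})"
proof -
  define P where "P = picit F Y0"
  have P0: "P 0 i t = Y0 i" for i t by (simp add: P_def)
  have PS: "P (Suc n) i t = Y0 i + integral {0..t} (\<lambda>s. F i (\<lambda>j. P n j s))" for n i t
    by (simp add: P_def)
  have cont: "continuous_on {0..T} (P n i)" if "i<N" for n i
    using that
  proof (induction n arbitrary: i)
    case 0 show ?case by (simp add: P0)
  next
    case (Suc n)
    have c: "continuous_on {0..T} (\<lambda>s. F i (\<lambda>j. P n j s))"
      by (rule lip_cont[where L=L and N=N]) (use lip Suc in auto)
    have "continuous_on {0..T} (\<lambda>t. integral {0..t} (\<lambda>s. F i (\<lambda>j. P n j s)))"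
      by (rule indefinite_integral_continuous_1) (rule integrable_continuous_interval[OF c])
    then show ?case unfolding PS by (intro continuous_intros)
  qed
  have Fc: "continuous_on {0..T} (\<lambda>s. F i (\<lambda>j. P n j s))" if "i<N" for n i
    by (rule lip_cont[where L=L and N=N]) (use lip cont that in auto)
  have Fcsub: "continuous_on {0..t} (\<lambda>s. F i (\<lambda>j. P n j s))" if "i<N" "t \<le> T" for n i t
    using continuous_on_subset[OF Fc[OF that(1)]] that by auto
  define M0 where "M0 = (\<Sum>i<N. norm (F i Y0))"
  define K where "K = real N * L"
  have M0: "M0 \<ge> 0" unfolding M0_def by (intro sum_nonneg) auto
  have K: "K \<ge> 0" unfolding K_def using L by simp
  have bnd: "\<forall>t\<in>{0..T}. (\<Sum>i<N. norm (P (Suc n) i t - P n i t)) \<le> M0 * T * (K*t)^n / fact n" for n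
  proof (induction n)
    case 0
    show ?case
    proof
      fix t assume t: "t \<in> {0..T}"
      have "norm (P (Suc 0) i t - P 0 i t) \<le> T * norm (F i Y0)" for i
      proof -
        have "P (Suc 0) i t - P 0 i t = t *\<^sub>R F i Y0"
          using t by (simp add: PS P0)
        then show ?thesis using t by (simp add: mult_right_mono)
      qed
      then have "(\<Sum>i<N. norm (P (Suc 0) i t - P 0 i t)) \<le> (\<Sum>i<N. T * norm (F i Y0))"
        by (intro sum_mono)
      then show "(\<Sum>i<N. norm (P (Suc 0) i t - P 0 i t)) \<le> M0 * T * (K * t) ^ 0 / fact 0"
        by (simp add: M0_def sum_distrib_left mult.commute)
    qed
  next
    case (Suc n)
    show ?case
    proof
      fix t assume t: "t \<in> {0..T}"
      define C where "C = M0 * T * K^n / fact n"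
      have C: "C \<ge> 0" unfolding C_def using M0 T K by simp
      have one: "norm (P (Suc (Suc n)) i t - P (Suc n) i t) \<le> L * (C * (t^Suc n / real (Suc n)))" if i: "i<N" for i
      proof -
        have i1: "(\<lambda>s. F i (\<lambda>j. P (Suc n) j s)) integrable_on {0..t}"
          using integrable_continuous_interval[OF Fcsub[OF i, of t "Suc n"]] t by auto
        have i2: "(\<lambda>s. F i (\<lambda>j. P n j s)) integrable_on {0..t}"
          using integrable_continuous_interval[OF Fcsub[OF i, of t n]] t by auto
        have eq: "P (Suc (Suc n)) i t - P (Suc n) i t =
            integral {0..t} (\<lambda>s. F i (\<lambda>j. P (Suc n) j s) - F i (\<lambda>j. P n j s))"
          by (subst PS[of "Suc n" i t], subst PS[of n i t]) (simp add: integral_diff[OF i1 i2])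
        have contd: "continuous_on {0..t} (\<lambda>s. L * (\<Sum>j<N. norm (P (Suc n) j s - P n j s)))"
          using t by (intro continuous_intros continuous_on_subset[OF cont]) auto
        have "norm (integral {0..t} (\<lambda>s. F i (\<lambda>j. P (Suc n) j s) - F i (\<lambda>j. P n j s)))
            \<le> integral {0..t} (\<lambda>s. L * (\<Sum>j<N. norm (P (Suc n) j s - P n j s)))"
          by (rule integral_norm_bound_integral)
            (use integrable_diff[OF i1 i2] integrable_continuous_interval[OF contd] lip[OF i] in auto)
        also have "\<dots> \<le> L * (C * (t^Suc n / real (Suc n)))"
        proof (rule has_integral_le[OF integrable_integral[OF integrable_continuous_interval[OF contd]]])
          show "((\<lambda>s. L * (C * s^n)) has_integral L * (C * (t^Suc n / real (Suc n)))) {0..t}"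
            using t by (intro has_integral_mult_right int_pow) auto
          fix s assume s: "s \<in> {0..t}"
          have "(\<Sum>j<N. norm (P (Suc n) j s - P n j s)) \<le> M0 * T * (K * s) ^ n / fact n"
            using Suc s t by auto
          also have "\<dots> = C * s^n" unfolding C_def by (simp add: power_mult_distrib)
          finally show "L * (\<Sum>j<N. norm (P (Suc n) j s - P n j s)) \<le> L * (C * s^n)"
            using L by (intro mult_left_mono) auto
        qed
        finally show ?thesis unfolding eq .
      qed
      have "(\<Sum>i<N. norm (P (Suc (Suc n)) i t - P (Suc n) i t)) \<le> (\<Sum>i<N. L * (C * (t^Suc n / real (Suc n))))"
        by (intro sum_mono one) auto
      also have "\<dots> = M0 * T * (K * t) ^ Suc n / fact (Suc n)"
        unfolding C_def K_def by (simp add: field_simps power_mult_distrib)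
      finally show "(\<Sum>i<N. norm (P (Suc (Suc n)) i t - P (Suc n) i t)) \<le> M0 * T * (K * t) ^ Suc n / fact (Suc n)" .
    qed
  qed
  define c where "c m = M0 * T * ((K*T)^m /\<^sub>R fact m)" for m
  have csum: "summable c" unfolding c_def
    by (intro summable_mult summable_exp_generic)
  have dbound: "norm (P (Suc m) i t - P m i t) \<le> c m" if i: "i<N" and t: "t \<in> {0..T}" for m i t
  proof -
    have "norm (P (Suc m) i t - P m i t) \<le> (\<Sum>i<N. norm (P (Suc m) i t - P m i t))"
      using i by (intro member_le_sum) auto
    also have "\<dots> \<le> M0 * T * (K*t)^m / fact m" using bnd t by auto
    also have "\<dots> \<le> M0 * T * (K*T)^m / fact m"
      using t K M0 T by (intro divide_right_mono mult_left_mono power_mono mult_nonneg_nonneg) auto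
    finally show ?thesis unfolding c_def by (simp add: divide_inverse mult_ac)
  qed
  define y where "y i t = Y0 i + (\<Sum>m. P (Suc m) i t - P m i t)" for i t
  have ulim: "uniform_limit {0..T} (\<lambda>n. P n i) (y i) sequentially" if i: "i<N" for i
  proof -
    have W: "uniform_limit {0..T} (\<lambda>n t. \<Sum>m<n. P (Suc m) i t - P m i t) (\<lambda>t. \<Sum>m. P (Suc m) i t - P m i t) sequentially"
      by (rule Weierstrass_m_test[OF _ csum]) (rule dbound[OF i])
    have "uniform_limit {0..T} (\<lambda>n t. Y0 i + (\<Sum>m<n. P (Suc m) i t - P m i t)) (\<lambda>t. Y0 i + (\<Sum>m. P (Suc m) i t - P m i t)) sequentially"
      by (intro uniform_limit_intros W)
    moreover have "(\<lambda>n t. Y0 i + (\<Sum>m<n. P (Suc m) i t - P m i t)) = (\<lambda>n. P n i)"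
    proof (intro ext)
      fix n t
      show "Y0 i + (\<Sum>m<n. P (Suc m) i t - P m i t) = P n i t"
        using sum_lessThan_telescope[of "\<lambda>m. P m i t" n] by (simp add: P0)
    qed
    ultimately show ?thesis unfolding y_def by simp
  qed
  have ycont: "continuous_on {0..T} (y i)" if i: "i<N" for i
    by (rule uniform_limit_theorem[OF _ ulim[OF i]]) (use cont i in auto)
  have "((\<lambda>s. F i (\<lambda>j. y j s)) has_integral (y i t - Y0 i)) {0..t}" if i: "i<N" and t: "t \<in> {0..T}" for i t
  proof -
    have uF: "uniform_limit {0..t} (\<lambda>n s. F i (\<lambda>j. P n j s)) (\<lambda>s. F i (\<lambda>j. y j s)) sequentially"
      unfolding uniform_limit_iff
    proof (intro allI impI)
      fix e :: real assume e: "e > 0"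
      define e' where "e' = e / (L * real N + 1)"
      have e': "e' > 0" unfolding e'_def using e L by (simp add: add_nonneg_pos)
      have "\<forall>j\<in>{..<N}. \<forall>\<^sub>F n in sequentially. \<forall>s\<in>{0..T}. dist (P n j s) (y j s) < e'"
        using ulim e' unfolding uniform_limit_iff by auto
      then have ev: "\<forall>\<^sub>F n in sequentially. \<forall>j\<in>{..<N}. \<forall>s\<in>{0..T}. dist (P n j s) (y j s) < e'"
        by (rule eventually_ball_finite[rotated]) simp
      show "\<forall>\<^sub>F n in sequentially. \<forall>s\<in>{0..t}. dist (F i (\<lambda>j. P n j s)) (F i (\<lambda>j. y j s)) < e"
        using ev
      proof eventually_elim
        case (elim n)
        show ?case
        proof
          fix s assume s: "s \<in> {0..t}"
          then have sT: "s \<in> {0..T}" using t by auto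
          have "dist (F i (\<lambda>j. P n j s)) (F i (\<lambda>j. y j s)) \<le> L * (\<Sum>j<N. norm (P n j s - y j s))"
            unfolding dist_norm using lip[OF i] .
          also have "\<dots> \<le> L * (\<Sum>j<N. e')"
            using elim sT L by (intro mult_left_mono sum_mono) (auto simp: dist_norm less_imp_le)
          also have "\<dots> = L * real N * e'" by simp
          also have "\<dots> < e"
          proof -
            have p: "0 < 1 + L * real N" using L by (simp add: add_pos_nonneg)
            have "L * real N * e < (1 + L * real N) * e" using e by simp
            then show ?thesis unfolding e'_def using p by (simp add: field_simps)
          qed
          finally show "dist (F i (\<lambda>j. P n j s)) (F i (\<lambda>j. y j s)) < e" .
        qed
      qed
    qed
    obtain I J where I: "\<And>n. ((\<lambda>s. F i (\<lambda>j. P n j s)) has_integral I n) {0..t}"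
      and J: "((\<lambda>s. F i (\<lambda>j. y j s)) has_integral J) {0..t}" and IJ: "I \<longlonglongrightarrow> J"
      by (rule uniform_limit_integral[OF uF]) (use Fcsub[OF i] t in auto)
    have "(\<lambda>n. P (Suc n) i t) \<longlonglongrightarrow> Y0 i + J"
    proof -
      have "integral {0..t} (\<lambda>s. F i (\<lambda>j. P n j s)) = I n" for n using I[of n] by (rule integral_unique)
      then show ?thesis unfolding PS using IJ by (simp add: tendsto_add)
    qed
    moreover have "(\<lambda>n. P (Suc n) i t) \<longlonglongrightarrow> y i t"
      using tendsto_uniform_limitI[OF ulim[OF i] t] by (rule LIMSEQ_Suc)
    ultimately have "y i t = Y0 i + J" using LIMSEQ_unique by blast
    then show ?thesis using J by simp
  qed
  then show ?thesis using ycont by blast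
qed

definition clipv :: "real \<Rightarrow> real^'d \<Rightarrow> real^'d" where
  "clipv r u = (\<chi> k. max (-r) (min r (u$k)))"

lemma clip_id: "norm u \<le> r \<Longrightarrow> clipv r u = u"
  unfolding clipv_def vec_eq_iff
proof (intro allI)
  fix i assume "norm u \<le> r"
  then have "\<bar>u$i\<bar> \<le> r" using component_le_norm_cart[of u i] by linarith
  then show "(\<chi> k. max (-r) (min r (u$k))) $ i = u $ i" by (simp add: abs_le_iff)
qed

lemma clip_lip: "norm (clipv r u - clipv r w) \<le> norm (u - w)"
  unfolding norm_vec_def
  by (rule L2_set_mono) (auto simp: clipv_def)

lemma clip_mono: "0 \<le> inner (u - w) (clipv r u - clipv r w)"
  unfolding inner_vec_def
proof (rule sum_nonneg)
  fix k
  have "0 \<le> (u$k - w$k) * (max (-r) (min r (u$k)) - max (-r) (min r (w$k)))"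
  proof (cases "u$k \<le> w$k")
    case True
    then have "max (-r) (min r (u$k)) \<le> max (-r) (min r (w$k))" by linarith
    then show ?thesis using True by (intro mult_nonpos_nonpos) auto
  next
    case False
    then have "max (-r) (min r (u$k)) \<ge> max (-r) (min r (w$k))" by linarith
    then show ?thesis using False by (intro mult_nonneg_nonneg) auto
  qed
  then show "0 \<le> inner ((u - w) $ k) ((clipv r u - clipv r w) $ k)"
    by (simp add: clipv_def)
qed

lemma clip_bnd: "0 \<le> r \<Longrightarrow> norm (clipv r u) \<le> real CARD('d) * r" for u :: "real^'d"
proof -
  assume r: "0 \<le> r"
  have "norm (clipv r u) \<le> (\<Sum>k\<in>UNIV. \<bar>clipv r u $ k\<bar>)" by (rule norm_le_l1_cart)
  also have "\<dots> \<le> (\<Sum>k\<in>(UNIV::'d set). r)"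
    by (intro sum_mono) (use r in \<open>auto simp: clipv_def\<close>)
  finally show ?thesis by simp
qed

lemma sym_sum_nonpos:
  fixes u c :: "nat \<Rightarrow> 'a::real_inner"
  assumes sym: "\<And>i j. \<psi> i j = \<psi> j i" and nn: "\<And>i j. \<psi> i j \<ge> 0"
    and mono: "\<And>i j. inner (u i - u j) (c i - c j) \<ge> 0"
  shows "(\<Sum>i\<in>A. \<Sum>j\<in>A. \<psi> i j * inner (u i) (c j - c i)) \<le> 0"
proof -
  define S where "S = (\<Sum>i\<in>A. \<Sum>j\<in>A. \<psi> i j * inner (u i) (c j - c i))"
  have S': "S = (\<Sum>i\<in>A. \<Sum>j\<in>A. \<psi> i j * inner (u j) (c i - c j))"
    unfolding S_def by (subst sum.swap) (simp add: sym)
  have "S + S = (\<Sum>i\<in>A. \<Sum>j\<in>A. - (\<psi> i j * inner (u i - u j) (c i - c j)))"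
    apply (subst (2) S')
    unfolding S_def sum.distrib[symmetric]
    by (intro sum.cong refl) (simp add: algebra_simps inner_diff_left inner_diff_right)
  also have "\<dots> \<le> 0"
    by (intro sum_nonpos) (simp add: mult_nonneg_nonneg nn mono)
  finally show ?thesis unfolding S_def by simp
qed

lemma sq_deriv:
  fixes u :: "real \<Rightarrow> 'a::real_inner"
  assumes "(u has_vector_derivative w) (at s within S)"
  shows "((\<lambda>s. inner (u s) (u s)) has_vector_derivative 2 * inner (u s) w) (at s within S)"
proof -
  have d: "(u has_derivative (\<lambda>h. h *\<^sub>R w)) (at s within S)"
    using assms unfolding has_vector_derivative_def .
  have "((\<lambda>s. inner (u s) (u s)) has_derivative (\<lambda>h. inner (u s) (h *\<^sub>R w) + inner (h *\<^sub>R w) (u s))) (at s within S)"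
    by (rule has_derivative_inner[OF d d])
  moreover have "(\<lambda>h. inner (u s) (h *\<^sub>R w) + inner (h *\<^sub>R w) (u s)) = (\<lambda>h. h *\<^sub>R (2 * inner (u s) w))"
    by (auto simp: inner_commute algebra_simps)
  ultimately show ?thesis unfolding has_vector_derivative_def by simp
qed

lemma norm_snd_le: "norm (snd x) \<le> norm x"
  by (cases x) (auto simp: norm_Pair intro: real_le_rsqrt)
lemma norm_fst_le: "norm (fst x) \<le> norm x"
  by (cases x) (auto simp: norm_Pair intro: real_le_rsqrt)

definition Fsys :: "nat \<Rightarrow> (real^'d \<Rightarrow> real^'d \<Rightarrow> real) \<Rightarrow> real \<Rightarrow> real^'d \<Rightarrow> real \<Rightarrow> nat
    \<Rightarrow> (nat \<Rightarrow> 'd phase) \<Rightarrow> 'd phase" where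
  "Fsys N \<Psi> lam vbar r i Y = (snd (Y i),
     (1 / real N) *\<^sub>R (\<Sum>j<N. \<Psi> (fst (Y i)) (fst (Y j)) *\<^sub>R
        (clipv r (snd (Y j) - vbar) - clipv r (snd (Y i) - vbar)))
     - (1 / sqrt lam) *\<^sub>R (snd (Y i) - vbar))"

lemma Fsys_lip:
  fixes \<Psi> :: "real^'d \<Rightarrow> real^'d \<Rightarrow> real"
  assumes lipP: "Lp-lipschitz_on UNIV (\<lambda>p. \<Psi> (fst p) (snd p))"
    and bdd: "\<And>x y. \<bar>\<Psi> x y\<bar> \<le> M"
    and r: "0 \<le> r" and lam: "lam > 0" and i: "i < N"
  shows "norm (Fsys N \<Psi> lam vbar r i Y - Fsys N \<Psi> lam vbar r i Z)
     \<le> (1 + 1 / sqrt lam + 2 * (Lp * (2 * real CARD('d) * r) + M)) * (\<Sum>j<N. norm (Y j - Z j))"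
proof -
  define D where "D = (\<Sum>j<N. norm (Y j - Z j))"
  define B where "B = 2 * real CARD('d) * r"
  define Q where "Q = Lp * B + M"
  have Lp: "Lp \<ge> 0" using lipP by (simp add: lipschitz_on_def)
  have M: "M \<ge> 0" using bdd[of 0 0] by simp
  have B: "B \<ge> 0" unfolding B_def using r by simp
  have Q: "Q \<ge> 0" unfolding Q_def using Lp B M by simp
  have Di: "norm (Y i - Z i) \<le> D" unfolding D_def using i by (intro member_le_sum) auto
  have N: "real N \<ge> 1" using i by simp
  define c where "c Y j = clipv r (snd (Y j) - vbar)" for Y :: "nat \<Rightarrow> 'd phase" and j
  have cd: "norm (c Y j - c Z j) \<le> norm (Y j - Z j)" for j
  proof -
    have "norm (c Y j - c Z j) \<le> norm ((snd (Y j) - vbar) - (snd (Z j) - vbar))"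
      unfolding c_def by (rule clip_lip)
    also have "\<dots> = norm (snd (Y j - Z j))" by simp
    also have "\<dots> \<le> norm (Y j - Z j)" by (rule norm_snd_le)
    finally show ?thesis .
  qed
  have cb: "norm (c Y j - c Y k) \<le> B" for Y j k
  proof -
    have "norm (c Y j - c Y k) \<le> norm (c Y j) + norm (c Y k)" by (rule norm_triangle_ineq4)
    also have "\<dots> \<le> real CARD('d) * r + real CARD('d) * r"
      unfolding c_def by (intro add_mono clip_bnd r)
    finally show ?thesis unfolding B_def by (simp add: mult_ac)
  qed
  have Pd: "\<bar>\<Psi> (fst (Y i)) (fst (Y j)) - \<Psi> (fst (Z i)) (fst (Z j))\<bar> \<le> Lp * (norm (Y i - Z i) + norm (Y j - Z j))" for j
  proof -
    have "\<bar>\<Psi> (fst (Y i)) (fst (Y j)) - \<Psi> (fst (Z i)) (fst (Z j))\<bar>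
        \<le> Lp * dist (fst (Y i), fst (Y j)) (fst (Z i), fst (Z j))"
      using lipschitz_onD[OF lipP, of "(fst (Y i), fst (Y j))" "(fst (Z i), fst (Z j))"]
      by (simp add: dist_real_def)
    also have "dist (fst (Y i), fst (Y j)) (fst (Z i), fst (Z j)) \<le> norm (fst (Y i - Z i)) + norm (fst (Y j - Z j))"
      unfolding dist_norm using norm_Pair_le[of "fst (Y i - Z i)" "fst (Y j - Z j)"] by simp
    also have "\<dots> \<le> norm (Y i - Z i) + norm (Y j - Z j)" by (intro add_mono norm_fst_le)
    finally show ?thesis using Lp by (simp add: mult_left_mono)
  qed
  have Aj: "norm (\<Psi> (fst (Y i)) (fst (Y j)) *\<^sub>R (c Y j - c Y i) - \<Psi> (fst (Z i)) (fst (Z j)) *\<^sub>R (c Z j - c Z i))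
      \<le> Q * (norm (Y i - Z i) + norm (Y j - Z j))" for j
  proof -
    let ?a = "\<Psi> (fst (Y i)) (fst (Y j))" and ?b = "\<Psi> (fst (Z i)) (fst (Z j))"
    have "?a *\<^sub>R (c Y j - c Y i) - ?b *\<^sub>R (c Z j - c Z i)
        = (?a - ?b) *\<^sub>R (c Y j - c Y i) + ?b *\<^sub>R ((c Y j - c Z j) - (c Y i - c Z i))"
      by (simp add: algebra_simps)
    then have "norm (?a *\<^sub>R (c Y j - c Y i) - ?b *\<^sub>R (c Z j - c Z i))
        \<le> norm ((?a - ?b) *\<^sub>R (c Y j - c Y i)) + norm (?b *\<^sub>R ((c Y j - c Z j) - (c Y i - c Z i)))"
      by (simp only:) (rule norm_triangle_ineq)
    then have "norm (?a *\<^sub>R (c Y j - c Y i) - ?b *\<^sub>R (c Z j - c Z i))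
        \<le> \<bar>?a - ?b\<bar> * norm (c Y j - c Y i) + \<bar>?b\<bar> * norm ((c Y j - c Z j) - (c Y i - c Z i))"
      by simp
    also have "\<dots> \<le> (Lp * (norm (Y i - Z i) + norm (Y j - Z j))) * B + M * (norm (Y j - Z j) + norm (Y i - Z i))"
    proof (intro add_mono mult_mono)
      show "norm (c Y j - c Z j - (c Y i - c Z i)) \<le> norm (Y j - Z j) + norm (Y i - Z i)"
        using norm_triangle_ineq4[of "c Y j - c Z j" "c Y i - c Z i"] cd[of j] cd[of i] by linarith
    qed (use Pd bdd cb Lp M in auto)
    also have "\<dots> = Q * (norm (Y i - Z i) + norm (Y j - Z j))"
      unfolding Q_def by (simp add: algebra_simps)
    finally show ?thesis .
  qed
  have sumA: "norm ((1 / real N) *\<^sub>R (\<Sum>j<N. \<Psi> (fst (Y i)) (fst (Y j)) *\<^sub>R (c Y j - c Y i))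
       - (1 / real N) *\<^sub>R (\<Sum>j<N. \<Psi> (fst (Z i)) (fst (Z j)) *\<^sub>R (c Z j - c Z i))) \<le> 2 * Q * D"
  proof -
    have "norm ((1 / real N) *\<^sub>R (\<Sum>j<N. \<Psi> (fst (Y i)) (fst (Y j)) *\<^sub>R (c Y j - c Y i))
       - (1 / real N) *\<^sub>R (\<Sum>j<N. \<Psi> (fst (Z i)) (fst (Z j)) *\<^sub>R (c Z j - c Z i)))
       = (1 / real N) * norm (\<Sum>j<N. \<Psi> (fst (Y i)) (fst (Y j)) *\<^sub>R (c Y j - c Y i) - \<Psi> (fst (Z i)) (fst (Z j)) *\<^sub>R (c Z j - c Z i))"
      by (simp add: scaleR_diff_right[symmetric] sum_subtractf)
    also have "\<dots> \<le> (1 / real N) * (\<Sum>j<N. Q * (norm (Y i - Z i) + norm (Y j - Z j)))"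
      by (intro mult_left_mono order_trans[OF norm_sum] sum_mono Aj) auto
    also have "\<dots> = Q * norm (Y i - Z i) + Q * D / real N"
      using N unfolding D_def by (simp add: sum.distrib sum_distrib_left field_simps)
    also have "\<dots> \<le> Q * D + Q * D"
    proof (intro add_mono)
      show "Q * norm (Y i - Z i) \<le> Q * D" using Di Q by (intro mult_left_mono)
      have "Q * D / real N \<le> Q * D / 1" 
        using N Q by (intro divide_left_mono) (auto simp: D_def intro!: mult_nonneg_nonneg sum_nonneg)
      then show "Q * D / real N \<le> Q * D" by simp
    qed
    finally show ?thesis by (simp add: mult_ac)
  qed
  have sY: "norm (snd (Y i) - snd (Z i)) \<le> D"
    using norm_snd_le[of "Y i - Z i"] Di by simp
  have "norm (Fsys N \<Psi> lam vbar r i Y - Fsys N \<Psi> lam vbar r i Z)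
     \<le> norm (snd (Y i) - snd (Z i)) + norm (
        ((1 / real N) *\<^sub>R (\<Sum>j<N. \<Psi> (fst (Y i)) (fst (Y j)) *\<^sub>R (c Y j - c Y i))
       - (1 / real N) *\<^sub>R (\<Sum>j<N. \<Psi> (fst (Z i)) (fst (Z j)) *\<^sub>R (c Z j - c Z i)))
       - (1 / sqrt lam) *\<^sub>R (snd (Y i) - snd (Z i)))"
    unfolding Fsys_def c_def using norm_Pair_le by (simp add: algebra_simps)
  also have "\<dots> \<le> D + (2 * Q * D + (1 / sqrt lam) * D)"
  proof (rule add_mono[OF sY])
    have "norm ((1 / sqrt lam) *\<^sub>R (snd (Y i) - snd (Z i))) = (1 / sqrt lam) * norm (snd (Y i) - snd (Z i))"
      using lam by simp
    also have "\<dots> \<le> (1 / sqrt lam) * D" using sY lam by (intro mult_left_mono) auto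
    finally have sc: "norm ((1 / sqrt lam) *\<^sub>R (snd (Y i) - snd (Z i))) \<le> (1 / sqrt lam) * D" .
    show "norm (((1 / real N) *\<^sub>R (\<Sum>j<N. \<Psi> (fst (Y i)) (fst (Y j)) *\<^sub>R (c Y j - c Y i))
       - (1 / real N) *\<^sub>R (\<Sum>j<N. \<Psi> (fst (Z i)) (fst (Z j)) *\<^sub>R (c Z j - c Z i)))
       - (1 / sqrt lam) *\<^sub>R (snd (Y i) - snd (Z i))) \<le> 2 * Q * D + (1 / sqrt lam) * D"
      by (rule order_trans[OF norm_triangle_ineq4 add_mono[OF sumA sc]])
  qed
  also have "\<dots> = (1 + 1 / sqrt lam + 2 * (Lp * (2 * real CARD('d) * r) + M)) * D"
    unfolding Q_def B_def by (simp add: algebra_simps)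
  finally show ?thesis unfolding D_def .
qed

lemma snd_vd:
  assumes "(f has_vector_derivative f') F"
  shows "((\<lambda>x. snd (f x) - c) has_vector_derivative snd f') F"
  using assms unfolding has_vector_derivative_def
  by (auto intro!: derivative_eq_intros)

lemma competitor:
  fixes \<Psi> :: "real^'d \<Rightarrow> real^'d \<Rightarrow> real" and x0 v0 :: "nat \<Rightarrow> real^'d" and vbar :: "real^'d"
    and T lam :: real
  assumes T: "T > 0" and lam: "lam > 0" and N: "N \<ge> 1"
    and lipP: "Lp-lipschitz_on UNIV (\<lambda>p. \<Psi> (fst p) (snd p))"
    and sym: "\<And>x y. \<Psi> x y = \<Psi> y x" and nn: "\<And>x y. \<Psi> x y \<ge> 0" and bdd: "\<And>x y. \<bar>\<Psi> x y\<bar> \<le> M"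
  shows "\<exists>x v. particle_traj T \<Psi> N (\<lambda>t z. - ((1 / sqrt lam) *\<^sub>R (snd z - vbar))) x0 v0 x v \<and>
     particle_cost T lam vbar N (\<lambda>t z. - ((1 / sqrt lam) *\<^sub>R (snd z - vbar))) x v
       \<le> ennreal (sqrt lam * ((1 / real N) * (\<Sum>i<N. (norm (v0 i - vbar))\<^sup>2)))"
proof -
  define g :: "real \<Rightarrow> 'd phase \<Rightarrow> real^'d" where "g = (\<lambda>t z. - ((1 / sqrt lam) *\<^sub>R (snd z - vbar)))"
  define E0 where "E0 = (\<Sum>i<N. (norm (v0 i - vbar))\<^sup>2)"
  define r where "r = sqrt E0"
  have E0: "E0 \<ge> 0" unfolding E0_def by (intro sum_nonneg) auto
  have r: "r \<ge> 0" unfolding r_def using E0 by simp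
  define F where "F = Fsys N \<Psi> lam vbar r"
  define Y0 where "Y0 i = (x0 i, v0 i)" for i
  define Lc where "Lc = 1 + 1 / sqrt lam + 2 * (Lp * (2 * real CARD('d) * r) + M)"
  have Lp: "Lp \<ge> 0" using lipP by (simp add: lipschitz_on_def)
  have M: "M \<ge> 0" using bdd[of 0 0] by simp
  have Lc: "Lc \<ge> 0" unfolding Lc_def using Lp M r lam by simp
  have Flip: "\<And>i Y Z. i < N \<Longrightarrow> norm (F i Y - F i Z) \<le> Lc * (\<Sum>j<N. norm (Y j - Z j))"
    unfolding F_def Lc_def by (rule Fsys_lip[OF lipP bdd r lam])
  obtain y where yc: "\<forall>i<N. continuous_on {0..T} (y i)"
    and yint: "\<forall>i<N. \<forall>t\<in>{0..T}. ((\<lambda>s. F i (\<lambda>j. y j s)) has_integral (y i t - Y0 i)) {0..t}"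
    using picard[of T Lc N F Y0] T Lc Flip by auto
  define G where "G i s = F i (\<lambda>j. y j s)" for i s
  have Gc: "continuous_on {0..T} (G i)" if "i < N" for i
    unfolding G_def by (rule lip_cont[where L=Lc and N=N]) (use Flip that yc in auto)
  have Gint: "((G i) has_integral (y i t - Y0 i)) {0..t}" if "i < N" "t \<in> {0..T}" for i t
    using yint that unfolding G_def by auto
  have yeq: "y i t = Y0 i + integral {0..t} (G i)" if "i < N" "t \<in> {0..T}" for i t
    using integral_unique[OF Gint[OF that]] by simp
  have y0: "y i 0 = Y0 i" if "i < N" for i
    using yeq[OF that, of 0] T by simp
  define u where "u i s = snd (y i s) - vbar" for i s
  define E where "E s = (\<Sum>i<N. inner (u i s) (u i s))" for s
  define E' where "E' s = (\<Sum>i<N. 2 * inner (u i s) (snd (G i s)))" for s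
  have Ec: "continuous_on {0..T} E"
    unfolding E_def u_def using yc by (intro continuous_intros) auto
  have Enn: "E s \<ge> 0" for s unfolding E_def by (intro sum_nonneg) auto
  have EE0: "E 0 = E0"
    unfolding E_def E0_def u_def by (intro sum.cong refl) (simp add: y0 Y0_def power2_norm_eq_inner)
  have Ederiv: "(E has_vector_derivative E' s) (at s within {0..t})" if t: "t \<in> {0..T}" and s: "s \<in> {0..t}" for s t
  proof -
    have sub: "{0..t} \<subseteq> {0..T}" using t by auto
    have yd: "(y i has_vector_derivative G i s) (at s within {0..t})" if i: "i < N" for i
    proof -
      have "((\<lambda>s. integral {0..s} (G i)) has_vector_derivative G i s) (at s within {0..t})"
        by (rule integral_has_vector_derivative[OF continuous_on_subset[OF Gc[OF i] sub] s])
      then have "((\<lambda>s. Y0 i + integral {0..s} (G i)) has_vector_derivative G i s) (at s within {0..t})"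
        using has_vector_derivative_add[OF has_vector_derivative_const] by fastforce
      then show ?thesis
        by (rule has_vector_derivative_transform[OF s, rotated]) (use yeq i sub in auto)
    qed
    show ?thesis unfolding E_def E'_def
      by (intro has_vector_derivative_sum sq_deriv) (unfold u_def, rule snd_vd, rule yd, simp)
  qed
  have E'le: "E' s \<le> - (2 / sqrt lam) * E s" if s: "s \<in> {0..T}" for s
  proof -
    define c where "c i = clipv r (u i s)" for i
    define \<psi> where "\<psi> i j = \<Psi> (fst (y i s)) (fst (y j s))" for i j
    have Gs: "snd (G i s) = (1 / real N) *\<^sub>R (\<Sum>j<N. \<psi> i j *\<^sub>R (c j - c i)) - (1 / sqrt lam) *\<^sub>R u i s" for i
      unfolding G_def F_def Fsys_def c_def \<psi>_def u_def by simp
    have "E' s = (2 / real N) * (\<Sum>i<N. \<Sum>j<N. \<psi> i j * inner (u i s) (c j - c i)) - (2 / sqrt lam) * E s"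
      unfolding E'_def E_def Gs
      by (simp add: inner_diff_right inner_sum_right sum_subtractf sum_distrib_left mult.assoc)
    also have "\<dots> \<le> 0 - (2 / sqrt lam) * E s"
    proof -
      have "(\<Sum>i<N. \<Sum>j<N. \<psi> i j * inner (u i s) (c j - c i)) \<le> 0"
        by (rule sym_sum_nonpos[where u="\<lambda>i. u i s"]) (auto simp: \<psi>_def sym nn c_def clip_mono)
      then show ?thesis by (simp add: mult_nonneg_nonpos divide_nonpos_nonneg)
    qed
    finally show ?thesis by simp
  qed
  have EiT: "E integrable_on {0..t}" if t: "t \<in> {0..T}" for t
    by (rule integrable_continuous_interval, rule continuous_on_subset[OF Ec]) (use t in auto)
  have H: "E t + (2 / sqrt lam) * integral {0..t} E \<le> E0" if t: "t \<in> {0..T}" for t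
  proof -
    have ft: "(E' has_integral E t - E 0) {0..t}"
      by (rule fundamental_theorem_of_calculus) (use t Ederiv[OF t] in auto)
    have Ei: "E integrable_on {0..t}"
      by (rule integrable_continuous_interval, rule continuous_on_subset[OF Ec]) (use t in auto)
    have "E t - E 0 \<le> - (2 / sqrt lam) * integral {0..t} E"
      by (rule has_integral_le[OF ft has_integral_mult_right[OF integrable_integral[OF Ei]]])
        (use E'le t in auto)
    then show ?thesis using EE0 by simp
  qed
  have Ebound: "E t \<le> E0" if t: "t \<in> {0..T}" for t
  proof -
    have "integral {0..t} E \<ge> 0" by (rule integral_nonneg) (use Enn EiT[OF t] in auto)
    then show ?thesis using H[OF t] lam by (smt (verit) divide_nonneg_nonneg mult_nonneg_nonneg real_sqrt_ge_zero)
  qed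
  have ubound: "norm (u i t) \<le> r" if i: "i < N" and t: "t \<in> {0..T}" for i t
  proof -
    have "(norm (u i t))\<^sup>2 \<le> E t"
      unfolding E_def power2_norm_eq_inner using i by (intro member_le_sum) auto
    then have "(norm (u i t))\<^sup>2 \<le> E0" using Ebound[OF t] by simp
    then show ?thesis unfolding r_def by (rule real_le_rsqrt)
  qed
  have intE: "integral {0..T} E \<le> sqrt lam / 2 * E0"
  proof -
    have "(2 / sqrt lam) * integral {0..T} E \<le> E0" using H[of T] Enn[of T] T by simp
    then show ?thesis using lam by (simp add: field_simps)
  qed
  define x where "x i s = fst (y i s)" for i s
  define v where "v i s = snd (y i s)" for i s
  have traj: "particle_traj T \<Psi> N g x0 v0 x v"
    unfolding particle_traj_def
  proof (intro allI impI ballI conjI)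
    fix i t assume i: "i < N" and t: "t \<in> {0..T}"
    have fG: "(fst \<circ> G i) = v i" by (auto simp: G_def F_def Fsys_def v_def)
    have "((fst \<circ> G i) has_integral fst (y i t - Y0 i)) {0..t}"
      by (rule has_integral_linear[OF Gint[OF i t] bounded_linear_fst])
    then show "(v i has_integral x i t - x0 i) {0..t}"
      unfolding fG by (simp add: x_def Y0_def)
    have sI: "((snd \<circ> G i) has_integral snd (y i t - Y0 i)) {0..t}"
      by (rule has_integral_linear[OF Gint[OF i t] bounded_linear_snd])
    have sI': "((snd \<circ> G i) has_integral (v i t - v0 i)) {0..t}"
      using sI by (simp add: v_def Y0_def)
    show "((\<lambda>s. (1 / real N) *\<^sub>R (\<Sum>j<N. \<Psi> (x i s) (x j s) *\<^sub>R (v j s - v i s)) + g s (x i s, v i s))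
        has_integral v i t - v0 i) {0..t}"
    proof (rule has_integral_eq[OF _ sI'])
      fix s assume s: "s \<in> {0..t}"
      then have sT: "s \<in> {0..T}" using t by auto
      have cl: "clipv r (snd (y j s) - vbar) = snd (y j s) - vbar" if j: "j < N" for j
        using clip_id[OF ubound[OF j sT]] unfolding u_def .
      have "(\<Sum>j<N. \<Psi> (fst (y i s)) (fst (y j s)) *\<^sub>R (clipv r (snd (y j s) - vbar) - clipv r (snd (y i s) - vbar)))
          = (\<Sum>j<N. \<Psi> (x i s) (x j s) *\<^sub>R (v j s - v i s))"
        by (intro sum.cong refl) (simp add: cl i x_def v_def)
      then show "(snd \<circ> G i) s = (1 / real N) *\<^sub>R (\<Sum>j<N. \<Psi> (x i s) (x j s) *\<^sub>R (v j s - v i s)) + g s (x i s, v i s)"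
        by (simp add: G_def F_def Fsys_def g_def v_def)
    qed
  qed
  have uc: "continuous_on {0..T} (\<lambda>s. 2 * inner (u i s) (u i s))" if i: "i < N" for i
    unfolding u_def using yc i by (intro continuous_intros) auto
  have integrand: "ennreal ((norm (v i s - vbar))\<^sup>2 + lam * (norm (g s (x i s, v i s)))\<^sup>2)
      = ennreal (2 * inner (u i s) (u i s))" for i s
  proof -
    have "lam * (norm (g s (x i s, v i s)))\<^sup>2 = lam * ((1 / sqrt lam) * norm (v i s - vbar))\<^sup>2"
      using lam by (simp add: g_def)
    also have "\<dots> = (norm (v i s - vbar))\<^sup>2"
      using lam by (simp add: power_mult_distrib power_divide)
    finally show ?thesis by (simp add: u_def v_def power2_norm_eq_inner)
  qed
  have each: "(\<integral>\<^sup>+ s\<in>{0..T}. ennreal ((norm (v i s - vbar))\<^sup>2 + lam * (norm (g s (x i s, v i s)))\<^sup>2) \<partial>lborel)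
      = ennreal (integral {0..T} (\<lambda>s. 2 * inner (u i s) (u i s)))" if i: "i < N" for i
    unfolding integrand
    by (rule nn_integral_has_integral_lebesgue'[OF _ integrable_integral[OF integrable_continuous_interval[OF uc[OF i]]]])
      simp
  have Inn: "integral {0..T} (\<lambda>s. 2 * inner (u i s) (u i s)) \<ge> 0" if i: "i < N" for i
    by (rule integral_nonneg[OF integrable_continuous_interval[OF uc[OF i]]]) simp
  have "(\<Sum>i<N. integral {0..T} (\<lambda>s. 2 * inner (u i s) (u i s))) = integral {0..T} (\<lambda>s. \<Sum>i<N. 2 * inner (u i s) (u i s))"
    by (rule integral_sum[symmetric]) (use integrable_continuous_interval[OF uc] in auto)
  also have "\<dots> = 2 * integral {0..T} E"
    unfolding E_def sum_distrib_left[symmetric] by simp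
  finally have sumI: "(\<Sum>i<N. integral {0..T} (\<lambda>s. 2 * inner (u i s) (u i s))) = 2 * integral {0..T} E" .
  have cost: "particle_cost T lam vbar N g x v \<le> ennreal (sqrt lam * ((1 / real N) * E0))"
  proof -
    have "(\<Sum>i<N. \<integral>\<^sup>+ s\<in>{0..T}. ennreal ((norm (v i s - vbar))\<^sup>2 + lam * (norm (g s (x i s, v i s)))\<^sup>2) \<partial>lborel)
        = (\<Sum>i<N. ennreal (integral {0..T} (\<lambda>s. 2 * inner (u i s) (u i s))))"
      by (rule sum.cong[OF refl each]) simp
    also have "\<dots> = ennreal (\<Sum>i<N. integral {0..T} (\<lambda>s. 2 * inner (u i s) (u i s)))"
      by (rule sum_ennreal) (use Inn in simp)
    finally have "particle_cost T lam vbar N g x v = ennreal (1 / real N) * ennreal (2 * integral {0..T} E)"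
      unfolding particle_cost_def sumI by simp
    also have "\<dots> \<le> ennreal (1 / real N) * ennreal (sqrt lam * E0)"
      using intE by (intro mult_left_mono ennreal_leI) auto
    also have "\<dots> = ennreal (sqrt lam * ((1 / real N) * E0))"
      using E0 lam by (subst ennreal_mult[symmetric]) (auto simp: mult_ac)
    finally show ?thesis .
  qed
  show ?thesis using traj cost unfolding g_def E0_def by blast
qed

lemma emp_integral:
  fixes z :: "nat \<Rightarrow> 'a::topological_space"
  assumes N: "N \<ge> 1" and G: "G \<in> borel_measurable borel"
  shows "(\<integral>\<^sup>+ w. G w \<partial>(empirical N z)) = ennreal (1 / real N) * (\<Sum>i<N. G (z i))"
proof -
  have zm: "z \<in> uniform_count_measure {..<N} \<rightarrow>\<^sub>M borel"
    by (subst measurable_cong_sets[OF sets_uniform_count_measure_count_space refl]) simp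
  have "(\<integral>\<^sup>+ w. G w \<partial>(empirical N z)) = (\<integral>\<^sup>+ i. G (z i) \<partial>uniform_count_measure {..<N})"
    unfolding empirical_def by (rule nn_integral_distr[OF zm]) (simp add: G)
  also have "\<dots> = (\<Sum>i<N. ennreal (1 / real N) * G (z i))"
    unfolding uniform_count_measure_def by (simp add: nn_integral_point_measure_finite)
  finally show ?thesis by (simp add: sum_distrib_left)
qed

lemma W1_bound:
  fixes \<mu> \<nu> :: "'a::metric_space measure" and Gt :: "'a \<Rightarrow> real"
  assumes W: "W1 \<mu> \<nu> < ennreal e"
    and Gm: "Gt \<in> borel_measurable borel" and Gnn: "\<And>a. Gt a \<ge> 0"
    and Glip: "\<And>a b. Gt a \<le> Gt b + Lg * dist a b" and Lg: "Lg \<ge> 0"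
  shows "(\<integral>\<^sup>+ z. ennreal (Gt z) \<partial>\<mu>) \<le> (\<integral>\<^sup>+ z. ennreal (Gt z) \<partial>\<nu>) + ennreal (Lg * e)"
proof -
  obtain \<pi> :: "('a \<times> 'a) measure" where spi: "sets \<pi> = sets borel" and m1: "distr \<pi> borel fst = \<mu>"
    and m2: "distr \<pi> borel snd = \<nu>" and less: "(\<integral>\<^sup>+ p. ennreal (dist (fst p) (snd p)) \<partial>\<pi>) < ennreal e"
    using W unfolding W1_def INF_less_iff by blast
  have fm: "fst \<in> \<pi> \<rightarrow>\<^sub>M borel"
    by (subst measurable_cong_sets[OF spi refl]) (simp add: borel_measurable_continuous_onI continuous_on_fst)
  have sm: "snd \<in> \<pi> \<rightarrow>\<^sub>M borel"
    by (subst measurable_cong_sets[OF spi refl]) (simp add: borel_measurable_continuous_onI continuous_on_snd)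
  have dm0: "(\<lambda>p. dist (fst p) (snd p)) \<in> borel_measurable \<pi>"
    by (subst measurable_cong_sets[OF spi refl])
      (intro borel_measurable_continuous_onI continuous_intros)
  have dm: "(\<lambda>p. ennreal (dist (fst p) (snd p))) \<in> borel_measurable \<pi>"
    using dm0 by measurable
  have "(\<integral>\<^sup>+ z. ennreal (Gt z) \<partial>\<mu>) = (\<integral>\<^sup>+ p. ennreal (Gt (fst p)) \<partial>\<pi>)"
    unfolding m1[symmetric] by (rule nn_integral_distr[OF fm]) (use Gm in measurable)
  also have "\<dots> \<le> (\<integral>\<^sup>+ p. ennreal (Gt (snd p)) + ennreal Lg * ennreal (dist (fst p) (snd p)) \<partial>\<pi>)"
  proof (rule nn_integral_mono)
    fix p
    have "ennreal (Gt (fst p)) \<le> ennreal (Gt (snd p) + Lg * dist (fst p) (snd p))"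
      using Glip by (intro ennreal_leI) auto
    also have "\<dots> = ennreal (Gt (snd p)) + ennreal Lg * ennreal (dist (fst p) (snd p))"
      using Gnn Lg by (simp add: ennreal_plus ennreal_mult)
    finally show "ennreal (Gt (fst p)) \<le> ennreal (Gt (snd p)) + ennreal Lg * ennreal (dist (fst p) (snd p))" .
  qed
  also have "\<dots> = (\<integral>\<^sup>+ p. ennreal (Gt (snd p)) \<partial>\<pi>) + ennreal Lg * (\<integral>\<^sup>+ p. ennreal (dist (fst p) (snd p)) \<partial>\<pi>)"
    by (subst nn_integral_add) (use Gm sm dm in \<open>auto simp: nn_integral_cmult\<close>)
  also have "(\<integral>\<^sup>+ p. ennreal (Gt (snd p)) \<partial>\<pi>) = (\<integral>\<^sup>+ z. ennreal (Gt z) \<partial>\<nu>)"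
    unfolding m2[symmetric] by (rule nn_integral_distr[OF sm, symmetric]) (use Gm in measurable)
  also have "ennreal Lg * (\<integral>\<^sup>+ p. ennreal (dist (fst p) (snd p)) \<partial>\<pi>) \<le> ennreal Lg * ennreal e"
    using less by (intro mult_left_mono) auto
  also have "ennreal Lg * ennreal e = ennreal (Lg * e)"
    using Lg by (simp add: ennreal_mult')
  finally show ?thesis by simp
qed

lemma cara_meas:
  fixes f :: "real \<Rightarrow> 'a::metric_space \<Rightarrow> 'b::real_normed_vector" and T :: real
  assumes meas: "\<And>z. (\<lambda>t. f t z) \<in> borel_measurable (lebesgue_on {0..T})"
    and AEc: "AE t in lebesgue_on {0..T}. continuous_on UNIV (f t)"
    and zc: "continuous_on {0..T} zz"
  shows "\<exists>h. h \<in> borel_measurable (lebesgue_on {0..T}) \<and> (AE t in lebesgue_on {0..T}. f t (zz t) = h t)"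
proof -
  obtain N0 where N0: "{t \<in> space (lebesgue_on {0..T}). \<not> continuous_on UNIV (f t)} \<subseteq> N0"
    and N0n: "N0 \<in> null_sets (lebesgue_on {0..T})"
    by (rule AE_E[OF AEc]) (metis null_setsI)
  have N0s: "N0 \<in> sets (lebesgue_on {0..T})" using N0n by (rule null_setsD2)
  define q where "q n t = real_of_int \<lfloor>real (Suc n) * t\<rfloor> / real (Suc n)" for n t
  define \<phi> where "\<phi> n t = (if t \<in> N0 then 0 else f t (zz (q n t)))" for n t
  define h where "h t = (if t \<in> N0 then 0 else f t (zz t))" for t
  have sp: "space (lebesgue_on {0..T}) = {0..T}" by simp
  have \<phi>m: "\<phi> n \<in> borel_measurable (lebesgue_on {0..T})" for n
  proof -
    have fl: "(\<lambda>t. \<lfloor>real (Suc n) * t\<rfloor>) \<in> lebesgue_on {0..T} \<rightarrow>\<^sub>M count_space UNIV"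
    proof (rule measurable_compose[OF _ measurable_real_floor])
      show "(\<lambda>t. real (Suc n) * t) \<in> borel_measurable (lebesgue_on {0..T})"
        by (rule continuous_imp_measurable_on_sets_lebesgue) (intro continuous_intros, simp)
    qed
    have "(\<lambda>t. (\<lambda>k t. f t (zz (real_of_int k / real (Suc n)))) \<lfloor>real (Suc n) * t\<rfloor> t) \<in> borel_measurable (lebesgue_on {0..T})"
      by (rule measurable_compose_countable[OF _ fl]) (rule meas)
    then have "(\<lambda>t. f t (zz (q n t))) \<in> borel_measurable (lebesgue_on {0..T})"
      unfolding q_def by simp
    moreover have "N0 \<inter> space (lebesgue_on {0..T}) \<in> sets (lebesgue_on {0..T})"
      using N0s sets.sets_into_space[OF N0s] by (simp add: Int_absorb2)
    ultimately show ?thesis unfolding \<phi>_def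
      by (intro measurable_If_set measurable_const) auto
  qed
  have conv: "(\<lambda>n. \<phi> n t) \<longlonglongrightarrow> h t" if t: "t \<in> space (lebesgue_on {0..T})" for t
  proof (cases "t \<in> N0")
    case True then show ?thesis by (simp add: \<phi>_def h_def)
  next
    case False
    then have fc: "continuous_on UNIV (f t)" using N0 t by auto
    have t0: "0 \<le> t" "t \<le> T" using t by auto
    have qle: "q n t \<le> t" for n
    proof -
      have "real_of_int \<lfloor>real (Suc n) * t\<rfloor> \<le> real (Suc n) * t" by (rule of_int_floor_le)
      then show ?thesis unfolding q_def by (simp add: divide_le_eq mult.commute)
    qed
    have qge: "t - 1 / real (Suc n) \<le> q n t" for n
    proof -
      have "real (Suc n) * t < real_of_int \<lfloor>real (Suc n) * t\<rfloor> + 1" by (rule real_of_int_floor_add_one_gt)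
      then have "real (Suc n) * t - 1 \<le> real_of_int \<lfloor>real (Suc n) * t\<rfloor>" by simp
      then have "(real (Suc n) * t - 1) / real (Suc n) \<le> real_of_int \<lfloor>real (Suc n) * t\<rfloor> / real (Suc n)"
        by (rule divide_right_mono) simp
      moreover have "(real (Suc n) * t - 1) / real (Suc n) = t - 1 / real (Suc n)"
        by (simp add: field_simps del: of_nat_Suc)
      ultimately show ?thesis unfolding q_def by simp
    qed
    have q0: "0 \<le> q n t" for n unfolding q_def using t0 by simp
    have "(\<lambda>n. t - 1 / real (Suc n)) \<longlonglongrightarrow> t - 0"
      by (intro tendsto_intros LIMSEQ_inverse_real_of_nat[unfolded inverse_eq_divide])
    then have l1: "(\<lambda>n. t - 1 / real (Suc n)) \<longlonglongrightarrow> t" by simp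
    have qt: "(\<lambda>n. q n t) \<longlonglongrightarrow> t"
      by (rule tendsto_sandwich[OF _ _ l1 tendsto_const]) (intro always_eventually allI qge qle)+
    have ev: "\<forall>\<^sub>F n in sequentially. q n t \<in> {0..T}"
      by (intro always_eventually allI) (use t0 q0 qle order_trans in fastforce)
    have "(\<lambda>n. zz (q n t)) \<longlonglongrightarrow> zz t"
      by (rule continuous_on_tendsto_compose[OF zc qt _ ev]) (use t0 in simp)
    then have "(\<lambda>n. f t (zz (q n t))) \<longlonglongrightarrow> f t (zz t)"
      by (rule continuous_on_tendsto_compose[OF fc]) simp_all
    then show ?thesis using False by (simp add: \<phi>_def h_def)
  qed
  have hm: "h \<in> borel_measurable (lebesgue_on {0..T})"
    by (rule borel_measurable_LIMSEQ_metric[OF \<phi>m conv])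
  have "AE t in lebesgue_on {0..T}. f t (zz t) = h t"
    by (rule AE_I'[OF N0n]) (auto simp: h_def split: if_splits)
  then show ?thesis using hm by blast
qed

lemma traj_cont:
  assumes traj: "particle_traj T \<Psi> N f x0 v0 x v" and i: "i < N" and T: "0 \<le> T"
  shows "continuous_on {0..T} (x i)" "continuous_on {0..T} (v i)"
proof -
  define w where "w s = (1 / real N) *\<^sub>R (\<Sum>j<N. \<Psi> (x i s) (x j s) *\<^sub>R (v j s - v i s)) + f s (x i s, v i s)" for s
  have tr: "(v i has_integral (x i t - x0 i)) {0..t}" "(w has_integral (v i t - v0 i)) {0..t}" if "t \<in> {0..T}" for t
    using traj i that unfolding particle_traj_def w_def by auto
  have wi: "w integrable_on {0..T}" using tr(2)[of T] T by auto
  have vi: "v i integrable_on {0..T}" using tr(1)[of T] T by auto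
  have "continuous_on {0..T} (\<lambda>t. v0 i + integral {0..t} w)"
    by (intro continuous_intros indefinite_integral_continuous_1 wi)
  then show vc: "continuous_on {0..T} (v i)"
  proof (rule continuous_on_eq)
    fix t assume t: "t \<in> {0..T}"
    show "v0 i + integral {0..t} w = v i t" using integral_unique[OF tr(2)[OF t]] by simp
  qed
  have "continuous_on {0..T} (\<lambda>t. x0 i + integral {0..t} (v i))"
    by (intro continuous_intros indefinite_integral_continuous_1 vi)
  then show "continuous_on {0..T} (x i)"
  proof (rule continuous_on_eq)
    fix t assume t: "t \<in> {0..T}"
    show "x0 i + integral {0..t} (v i) = x i t" using integral_unique[OF tr(1)[OF t]] by simp
  qed
qed

lemma emp_cost_le:
  fixes f :: "real \<Rightarrow> 'd phase \<Rightarrow> real^'d" and x v :: "nat \<Rightarrow> real \<Rightarrow> real^'d"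
    and T lam :: real and vbar :: "real^'d"
  assumes T: "T > 0" and N: "N \<ge> 1" and adm: "admissible T CB f"
    and traj: "particle_traj T \<Psi> N f x0 v0 x v"
  shows "(\<integral>\<^sup>+ t\<in>{0..T}. (\<integral>\<^sup>+ z. ennreal ((norm (snd z - vbar))\<^sup>2 + lam * (norm (f t z))\<^sup>2)
             \<partial>(empirical N (\<lambda>i. (x i t, v i t)))) \<partial>lborel)
     \<le> particle_cost T lam vbar N f x v"
proof -
  have meas: "\<And>z. (\<lambda>t. f t z) \<in> borel_measurable (lebesgue_on {0..T})"
    and AEL: "AE t in lebesgue_on {0..T}. \<exists>L. L-lipschitz_on UNIV (f t) \<and> norm (f t 0) + L \<le> CB"
    using adm unfolding admissible_def by auto
  have AEc: "AE t in lebesgue_on {0..T}. continuous_on UNIV (f t)"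
    using AEL by eventually_elim (auto intro: lipschitz_on_continuous_on)
  have Tsets: "{0..T} \<inter> space lebesgue \<in> sets lebesgue" by simp
  define zz where "zz i t = (x i t, v i t)" for i t
  have zc: "continuous_on {0..T} (zz i)" if "i < N" for i
    unfolding zz_def using traj_cont[OF traj that] T by (intro continuous_intros) auto
  have vc: "continuous_on {0..T} (v i)" if "i < N" for i
    using traj_cont[OF traj that] T by auto
  have "\<forall>i. \<exists>H. i < N \<longrightarrow> H \<in> borel_measurable (lebesgue_on {0..T}) \<and> (AE t in lebesgue_on {0..T}. f t (zz i t) = H t)"
    using cara_meas[OF meas AEc zc] by blast
  then obtain H where Hm: "\<And>i. i < N \<Longrightarrow> H i \<in> borel_measurable (lebesgue_on {0..T})"
    and HAE: "\<And>i. i < N \<Longrightarrow> AE t in lebesgue_on {0..T}. f t (zz i t) = H i t"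
    by metis
  define h where "h i t = ennreal ((norm (v i t - vbar))\<^sup>2 + lam * (norm (f t (x i t, v i t)))\<^sup>2)" for i t
  define h' where "h' i t = ennreal ((norm (v i t - vbar))\<^sup>2 + lam * (norm (H i t))\<^sup>2)" for i t
  have h'm: "(\<lambda>t. h' i t * indicator {0..T} t) \<in> borel_measurable lebesgue" if i: "i < N" for i
  proof -
    have vm: "v i \<in> borel_measurable (lebesgue_on {0..T})"
      by (rule continuous_imp_measurable_on_sets_lebesgue[OF vc[OF i]]) simp
    have "h' i \<in> borel_measurable (lebesgue_on {0..T})"
      unfolding h'_def using vm Hm[OF i] by measurable
    then show ?thesis using borel_measurable_restrict_space_iff_ennreal[OF Tsets] by blast
  qed
  have AEall: "AE t in lebesgue. t \<in> {0..T} \<longrightarrow> (continuous_on UNIV (f t) \<and> (\<forall>i\<in>{..<N}. f t (zz i t) = H i t))"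
  proof -
    have "AE t in lebesgue_on {0..T}. continuous_on UNIV (f t) \<and> (\<forall>i\<in>{..<N}. f t (zz i t) = H i t)"
      using AEc AE_finite_allI[of "{..<N}" "\<lambda>i t. f t (zz i t) = H i t"] HAE by auto
    then show ?thesis by (simp only: AE_restrict_space_iff[OF Tsets])
  qed
  have "(\<integral>\<^sup>+ t\<in>{0..T}. (\<integral>\<^sup>+ z. ennreal ((norm (snd z - vbar))\<^sup>2 + lam * (norm (f t z))\<^sup>2)
             \<partial>(empirical N (\<lambda>i. (x i t, v i t)))) \<partial>lborel)
      = (\<integral>\<^sup>+ t\<in>{0..T}. (\<integral>\<^sup>+ z. ennreal ((norm (snd z - vbar))\<^sup>2 + lam * (norm (f t z))\<^sup>2)
             \<partial>(empirical N (\<lambda>i. (x i t, v i t)))) \<partial>lebesgue)"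
    by (rule nn_integral_completion[symmetric])
  also have "\<dots> = (\<integral>\<^sup>+ t. (\<Sum>i<N. ennreal (1 / real N) * (h' i t * indicator {0..T} t)) \<partial>lebesgue)"
  proof (rule nn_integral_cong_AE)
    show "AE t in lebesgue. (\<integral>\<^sup>+ z. ennreal ((norm (snd z - vbar))\<^sup>2 + lam * (norm (f t z))\<^sup>2)
             \<partial>(empirical N (\<lambda>i. (x i t, v i t)))) * indicator {0..T} t
        = (\<Sum>i<N. ennreal (1 / real N) * (h' i t * indicator {0..T} t))"
      using AEall
    proof eventually_elim
      case (elim t)
      show ?case
      proof (cases "t \<in> {0..T}")
        case False then show ?thesis by simp
      next
        case True
        with elim have fc: "continuous_on UNIV (f t)" and fH: "\<And>i. i < N \<Longrightarrow> f t (zz i t) = H i t" by auto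
        have Gm: "(\<lambda>z. ennreal ((norm (snd z - vbar))\<^sup>2 + lam * (norm (f t z))\<^sup>2)) \<in> borel_measurable borel"
        proof -
          have "continuous_on UNIV (\<lambda>z. (norm (snd z - vbar))\<^sup>2 + lam * (norm (f t z))\<^sup>2)"
            by (intro continuous_intros fc)
          from borel_measurable_continuous_onI[OF this] show ?thesis by (rule measurable_compose) simp
        qed
        show ?thesis
          using True fH unfolding emp_integral[OF N Gm]
          by (simp add: sum_distrib_left h'_def zz_def)
      qed
    qed
  qed
  also have "\<dots> = (\<Sum>i<N. ennreal (1 / real N) * (\<integral>\<^sup>+ t. h' i t * indicator {0..T} t \<partial>lebesgue))"
  proof -
    have m: "(\<lambda>t. ennreal (1 / real N) * (h' i t * indicator {0..T} t)) \<in> borel_measurable lebesgue"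
      if "i \<in> {..<N}" for i
      using that by (intro borel_measurable_times_ennreal[OF borel_measurable_const h'm]) auto
    have "(\<integral>\<^sup>+ t. (\<Sum>i<N. ennreal (1 / real N) * (h' i t * indicator {0..T} t)) \<partial>lebesgue)
        = (\<Sum>i<N. (\<integral>\<^sup>+ t. ennreal (1 / real N) * (h' i t * indicator {0..T} t) \<partial>lebesgue))"
      by (rule nn_integral_sum[OF m])
    also have "\<dots> = (\<Sum>i<N. ennreal (1 / real N) * (\<integral>\<^sup>+ t. h' i t * indicator {0..T} t \<partial>lebesgue))"
      by (intro sum.cong refl nn_integral_cmult) (use h'm in auto)
    finally show ?thesis .
  qed
  also have "\<dots> = (\<Sum>i<N. ennreal (1 / real N) * (\<integral>\<^sup>+ t. h i t * indicator {0..T} t \<partial>lebesgue))"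
  proof (intro sum.cong refl arg_cong2[where f="(*)"] nn_integral_cong_AE)
    fix i assume i: "i \<in> {..<N}"
    show "AE t in lebesgue. h' i t * indicator {0..T} t = h i t * indicator {0..T} t"
      using AEall
    proof eventually_elim
      case (elim t)
      show ?case
      proof (cases "t \<in> {0..T}")
        case True
        then have "f t (x i t, v i t) = H i t" using elim i by (auto simp: zz_def)
        then show ?thesis by (simp add: h_def h'_def)
      qed simp
    qed
  qed
  also have "\<dots> = (\<Sum>i<N. ennreal (1 / real N) * (\<integral>\<^sup>+ t. h i t * indicator {0..T} t \<partial>lborel))"
    by (simp add: nn_integral_completion)
  also have "\<dots> = particle_cost T lam vbar N f x v"
    unfolding particle_cost_def h_def by (simp add: sum_distrib_left)
  finally show ?thesis by simp
qed

theorem lemma3p2: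
  fixes T lam CB R :: real
    and vbar :: "real^'d"
    and \<Psi> :: "real^'d \<Rightarrow> real^'d \<Rightarrow> real"
    and \<mu>0 :: "'d phase measure"
    and Nk :: "nat \<Rightarrow> nat"
    and x0 v0 :: "nat \<Rightarrow> nat \<Rightarrow> real^'d"
    and fk :: "nat \<Rightarrow> real \<Rightarrow> 'd phase \<Rightarrow> real^'d"
    and xk vk :: "nat \<Rightarrow> nat \<Rightarrow> real \<Rightarrow> real^'d"
    and \<mu> :: "real \<Rightarrow> 'd phase measure"
    and f :: "real \<Rightarrow> 'd phase \<Rightarrow> real^'d"
  assumes T_pos: "T > 0"
    and lam_pos: "lam > 0"
    and Psi_lip: "\<exists>L. L-lipschitz_on UNIV (\<lambda>p. \<Psi> (fst p) (snd p))"
    and Psi_sym: "\<forall>x y. \<Psi> x y = \<Psi> y x"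
    and Psi_nonneg: "\<forall>x y. \<Psi> x y \<ge> 0"
    and Psi_bdd: "\<exists>M. \<forall>x y. \<bar>\<Psi> x y\<bar> \<le> M"
    and CB_ge: "CB \<ge> (1 + norm vbar) / sqrt lam"
    and mu0_prob: "prob_space \<mu>0"
    and mu0_borel: "sets \<mu>0 = sets borel"
    and mu0_supp: "msupp \<mu>0 \<subseteq> ball 0 R"
    and Nk_pos: "\<forall>k. Nk k \<ge> 1"
    and Nk_lim: "filterlim Nk at_top sequentially"
    and init_ball: "\<forall>k i. i < Nk k \<longrightarrow> (x0 k i, v0 k i) \<in> ball 0 R"
    and init_conv: "(\<lambda>k. W1 (empirical (Nk k) (\<lambda>i. (x0 k i, v0 k i))) \<mu>0) \<longlonglongrightarrow> 0"
    and opt: "\<forall>k. optimal_control T \<Psi> lam vbar CB (Nk k) (x0 k) (v0 k) (fk k) (xk k) (vk k)"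
    and mu_P1: "\<forall>t\<in>{0..T}. P1 (\<mu> t)"
    and mu_cont: "\<forall>t\<in>{0..T}. \<forall>e>0. \<exists>\<delta>>0. \<forall>s\<in>{0..T}. \<bar>s - t\<bar> < \<delta> \<longrightarrow> W1 (\<mu> s) (\<mu> t) < ennreal e"
    and f_adm: "admissible T CB f"
    and weak: "weak_solution T \<Psi> \<mu>0 f \<mu>"
    and mu_init: "\<mu> 0 = \<mu>0"
    and mu_supp: "\<forall>t\<in>{0..T}. msupp (\<mu> t) \<subseteq> ball 0 R"
    and unif_conv: "\<forall>e>0. \<exists>K. \<forall>k\<ge>K. \<forall>t\<in>{0..T}.
        W1 (empirical (Nk k) (\<lambda>i. (xk k i t, vk k i t))) (\<mu> t) < ennreal e"
    and lsc: "(\<integral>\<^sup>+ t\<in>{0..T}. (\<integral>\<^sup>+ z. ennreal ((norm (snd z - vbar))\<^sup>2 + lam * (norm (f t z))\<^sup>2) \<partial>(\<mu> t)) \<partial>lborel)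
       \<le> liminf (\<lambda>k. \<integral>\<^sup>+ t\<in>{0..T}. (\<integral>\<^sup>+ z. ennreal ((norm (snd z - vbar))\<^sup>2 + lam * (norm (fk k t z))\<^sup>2)
             \<partial>(empirical (Nk k) (\<lambda>i. (xk k i t, vk k i t)))) \<partial>lborel)"
  shows "(\<integral>\<^sup>+ t\<in>{0..T}. (\<integral>\<^sup>+ z. ennreal ((norm (snd z - vbar))\<^sup>2 + lam * (norm (f t z))\<^sup>2) \<partial>(\<mu> t)) \<partial>lborel)
         \<le> ennreal (sqrt lam) * (\<integral>\<^sup>+ z. ennreal ((norm (snd z - vbar))\<^sup>2) \<partial>\<mu>0)"
proof -
  obtain Lp where lipP: "Lp-lipschitz_on UNIV (\<lambda>p. \<Psi> (fst p) (snd p))" using Psi_lip by blast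
  obtain M where bdd: "\<And>x y. \<bar>\<Psi> x y\<bar> \<le> M" using Psi_bdd by blast
  define G0 where "G0 z = ennreal ((norm (snd z - vbar))\<^sup>2)" for z :: "'d phase"
  define emp0 where "emp0 k = empirical (Nk k) (\<lambda>i. (x0 k i, v0 k i))" for k
  define A where "A k = (\<integral>\<^sup>+ t\<in>{0..T}. (\<integral>\<^sup>+ z. ennreal ((norm (snd z - vbar))\<^sup>2 + lam * (norm (fk k t z))\<^sup>2)
             \<partial>(empirical (Nk k) (\<lambda>i. (xk k i t, vk k i t)))) \<partial>lborel)" for k
  define RHS where "RHS = ennreal (sqrt lam) * (\<integral>\<^sup>+ z. G0 z \<partial>\<mu>0)"
  have G0m: "G0 \<in> borel_measurable borel"
  proof -
    have "continuous_on UNIV (\<lambda>z::'d phase. (norm (snd z - vbar))\<^sup>2)" by (intro continuous_intros)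
    from borel_measurable_continuous_onI[OF this] show ?thesis unfolding G0_def by (rule measurable_compose) simp
  qed
  define g :: "real \<Rightarrow> 'd phase \<Rightarrow> real^'d" where "g = (\<lambda>t z. - ((1 / sqrt lam) *\<^sub>R (snd z - vbar)))"
  have gadm: "admissible T CB g"
    unfolding admissible_def
  proof (intro conjI allI AE_I2 impI)
    fix z show "(\<lambda>t. g t z) \<in> borel_measurable (lebesgue_on {0..T})" unfolding g_def by simp
  next
    fix t
    have "(1 / sqrt lam)-lipschitz_on UNIV (g t)"
    proof (rule lipschitz_onI)
      fix z w :: "'d phase"
      have "dist (g t z) (g t w) = (1 / sqrt lam) * norm (snd z - snd w)"
        unfolding g_def dist_norm using lam_pos
        by (simp add: scaleR_diff_right[symmetric] norm_minus_commute)
      also have "\<dots> \<le> (1 / sqrt lam) * dist z w"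
        using norm_snd_le[of "z - w"] lam_pos by (intro mult_left_mono) (auto simp: dist_norm)
      finally show "dist (g t z) (g t w) \<le> (1 / sqrt lam) * dist z w" .
    qed (use lam_pos in simp)
    moreover have "norm (g t 0) + 1 / sqrt lam \<le> CB"
      using CB_ge lam_pos unfolding g_def by (simp add: add_divide_distrib)
    ultimately show "\<exists>L. L-lipschitz_on UNIV (g t) \<and> norm (g t 0) + L \<le> CB" by blast
  qed
  have step1: "A k \<le> ennreal (sqrt lam) * (\<integral>\<^sup>+ z. G0 z \<partial>emp0 k)" for k
  proof -
    have N: "Nk k \<ge> 1" using Nk_pos by auto
    have oc: "optimal_control T \<Psi> lam vbar CB (Nk k) (x0 k) (v0 k) (fk k) (xk k) (vk k)" using opt by auto
    then have adm: "admissible T CB (fk k)" and tr: "particle_traj T \<Psi> (Nk k) (fk k) (x0 k) (v0 k) (xk k) (vk k)"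
      unfolding optimal_control_def by auto
    have "A k \<le> particle_cost T lam vbar (Nk k) (fk k) (xk k) (vk k)"
      unfolding A_def by (rule emp_cost_le[OF T_pos N adm tr])
    also obtain x v where trg: "particle_traj T \<Psi> (Nk k) g (x0 k) (v0 k) x v"
      and cg: "particle_cost T lam vbar (Nk k) g x v \<le> ennreal (sqrt lam * ((1 / real (Nk k)) * (\<Sum>i<Nk k. (norm (v0 k i - vbar))\<^sup>2)))"
      using competitor[OF T_pos lam_pos N lipP _ _ bdd] Psi_sym Psi_nonneg
      unfolding g_def by blast
    have "particle_cost T lam vbar (Nk k) (fk k) (xk k) (vk k) \<le> particle_cost T lam vbar (Nk k) g x v"
      using oc gadm trg unfolding optimal_control_def by blast
    also note cg
    also have "ennreal (sqrt lam * ((1 / real (Nk k)) * (\<Sum>i<Nk k. (norm (v0 k i - vbar))\<^sup>2)))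
        = ennreal (sqrt lam) * (\<integral>\<^sup>+ z. G0 z \<partial>emp0 k)"
    proof -
      have "(\<integral>\<^sup>+ z. G0 z \<partial>emp0 k) = ennreal (1 / real (Nk k)) * (\<Sum>i<Nk k. G0 (x0 k i, v0 k i))"
        unfolding emp0_def by (rule emp_integral[OF N G0m])
      also have "\<dots> = ennreal ((1 / real (Nk k)) * (\<Sum>i<Nk k. (norm (v0 k i - vbar))\<^sup>2))"
        unfolding G0_def by (subst ennreal_mult) (auto simp: sum_nonneg)
      finally have e: "(\<integral>\<^sup>+ z. G0 z \<partial>emp0 k) = ennreal ((1 / real (Nk k)) * (\<Sum>i<Nk k. (norm (v0 k i - vbar))\<^sup>2))" .
      show ?thesis unfolding e using lam_pos
        by (subst ennreal_mult) (auto simp: sum_nonneg)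
    qed
    finally show ?thesis .
  qed
  have R: "R > 0"
  proof -
    have "(x0 0 0, v0 0 0) \<in> ball 0 R" using init_ball Nk_pos by (metis less_le_trans zero_less_one)
    then have "norm (x0 0 0, v0 0 0) < R" by simp
    then show ?thesis using norm_ge_zero[of "(x0 0 0, v0 0 0)"] by linarith
  qed
  define Rb where "Rb = R + norm vbar"
  have Rb: "Rb > 0" unfolding Rb_def using R by (simp add: add_pos_nonneg)
  define Gt where "Gt z = (min (norm (snd z - vbar)) Rb)\<^sup>2" for z :: "'d phase"
  have Gtm: "Gt \<in> borel_measurable borel"
  proof -
    have "continuous_on UNIV Gt" unfolding Gt_def by (intro continuous_intros)
    then show ?thesis by (rule borel_measurable_continuous_onI)
  qed
  have Gtnn: "Gt z \<ge> 0" for z unfolding Gt_def by simp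
  have Gtlip: "Gt a \<le> Gt b + (2 * Rb) * dist a b" for a b
  proof -
    define p where "p = min (norm (snd a - vbar)) Rb"
    define q where "q = min (norm (snd b - vbar)) Rb"
    have p: "0 \<le> p" "p \<le> Rb" and q: "0 \<le> q" "q \<le> Rb" unfolding p_def q_def using Rb by auto
    have "\<bar>norm (snd a - vbar) - norm (snd b - vbar)\<bar> \<le> norm ((snd a - vbar) - (snd b - vbar))"
      by (rule norm_triangle_ineq3)
    also have "\<dots> = norm (snd (a - b))" by simp
    also have "\<dots> \<le> dist a b" unfolding dist_norm by (rule norm_snd_le)
    finally have "\<bar>p - q\<bar> \<le> dist a b" unfolding p_def q_def by linarith
    then have "p - q \<le> dist a b" by linarith
    have "p\<^sup>2 - q\<^sup>2 = (p - q) * (p + q)" by (simp add: power2_eq_square algebra_simps)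
    also have "\<dots> \<le> \<bar>p - q\<bar> * (p + q)"
      using p q by (intro mult_right_mono) auto
    also have "\<dots> \<le> \<bar>p - q\<bar> * (2 * Rb)"
      using p q by (intro mult_left_mono) auto
    also have "\<dots> \<le> dist a b * (2 * Rb)" using \<open>\<bar>p - q\<bar> \<le> dist a b\<close> Rb by (intro mult_right_mono) auto
    finally show ?thesis unfolding Gt_def p_def[symmetric] q_def[symmetric] by (simp add: mult_ac)
  qed
  have Gt_le: "ennreal (Gt z) \<le> G0 z" for z
    unfolding Gt_def G0_def
    using Rb by (intro ennreal_leI power_mono) auto
  have emp_eq: "(\<integral>\<^sup>+ z. G0 z \<partial>emp0 k) = (\<integral>\<^sup>+ z. ennreal (Gt z) \<partial>emp0 k)" for k
  proof -
    have N: "Nk k \<ge> 1" using Nk_pos by auto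
    have Gtm': "(\<lambda>z. ennreal (Gt z)) \<in> borel_measurable borel" using Gtm by measurable
    have "(\<Sum>i<Nk k. G0 (x0 k i, v0 k i)) = (\<Sum>i<Nk k. ennreal (Gt (x0 k i, v0 k i)))"
    proof (intro sum.cong refl)
      fix i assume "i \<in> {..<Nk k}"
      then have "(x0 k i, v0 k i) \<in> ball 0 R" using init_ball by auto
      then have "norm (v0 k i) < R" using norm_snd_le[of "(x0 k i, v0 k i)"] by auto
      then have "norm (v0 k i - vbar) \<le> Rb" unfolding Rb_def using norm_triangle_ineq4[of "v0 k i" vbar] by linarith
      then show "G0 (x0 k i, v0 k i) = ennreal (Gt (x0 k i, v0 k i))" unfolding G0_def Gt_def by simp
    qed
    then show ?thesis unfolding emp0_def emp_integral[OF N G0m] emp_integral[OF N Gtm'] by simp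
  qed
  have step2: "\<forall>\<^sub>F k in sequentially. A k \<le> RHS + ennreal e" if e: "e > 0" for e
  proof -
    define c where "c = sqrt lam * (2 * Rb)"
    have c: "c \<ge> 0" unfolding c_def using Rb lam_pos by simp
    define e' where "e' = e / (c + 1)"
    have e': "e' > 0" unfolding e'_def using e c by simp
    have ce: "c * e' \<le> e"
    proof -
      have "c * e \<le> (c + 1) * e" using e by simp
      then show ?thesis unfolding e'_def using c by (simp add: field_simps)
    qed
    have "\<forall>\<^sub>F k in sequentially. W1 (emp0 k) \<mu>0 < ennreal e'"
      unfolding emp0_def by (rule order_tendstoD(2)[OF init_conv]) (use e' in simp)
    then show ?thesis
    proof eventually_elim
      case (elim k)
      have "A k \<le> ennreal (sqrt lam) * (\<integral>\<^sup>+ z. ennreal (Gt z) \<partial>emp0 k)" using step1 emp_eq by simp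
      also have "\<dots> \<le> ennreal (sqrt lam) * ((\<integral>\<^sup>+ z. ennreal (Gt z) \<partial>\<mu>0) + ennreal ((2 * Rb) * e'))"
        by (intro mult_left_mono W1_bound[OF elim Gtm Gtnn Gtlip]) (use Rb in auto)
      also have "\<dots> \<le> ennreal (sqrt lam) * ((\<integral>\<^sup>+ z. G0 z \<partial>\<mu>0) + ennreal ((2 * Rb) * e'))"
        by (intro mult_left_mono add_right_mono nn_integral_mono Gt_le) auto
      also have "\<dots> = RHS + ennreal (c * e')"
      proof -
        have "ennreal (sqrt lam) * ennreal ((2 * Rb) * e') = ennreal (c * e')"
          unfolding c_def using Rb e' lam_pos by (subst ennreal_mult[symmetric]) (auto simp: mult_ac)
        then show ?thesis unfolding RHS_def by (simp only: distrib_left)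
      qed
      also have "\<dots> \<le> RHS + ennreal e" using ce by (intro add_left_mono ennreal_leI)
      finally show ?case .
    qed
  qed
  have "liminf A \<le> RHS"
  proof (rule ennreal_le_epsilon)
    fix e :: real assume e: "0 < e"
    have "liminf A \<le> limsup A" by (rule Liminf_le_Limsup) simp
    also have "limsup A \<le> RHS + ennreal e" by (rule Limsup_bounded[OF step2[OF e]])
    finally show "liminf A \<le> RHS + ennreal e" .
  qed
  then show ?thesis using lsc unfolding A_def RHS_def G0_def by (rule order_trans[rotated])
qed

end
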